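(* Let $\mathcal{T}$ be the scheme on $\mathcal{M}$ given by $\mathcal{T}(\mathbf{p})_{2i}=p_i$ and $\mathcal{T}(\mathbf{p})_{2i+1}=M_{1/2}(M^1_i,M^2_i)$, where $$M^1_i=M_{-25/128}\big(M_{3/153}(p_i,p_{i-2}),\,p_{i-1}\big),\qquad M^2_i=M_{-25/128}\big(M_{3/153}(p_{i+1},p_{i+3}),\,p_{i+2}\big).$$ Then $\delta(\mathcal{T}(\mathbf{p}))\le 0.9844\,\delta(\mathbf{p})$ for all manifold data $\mathbf{p}$, and $\mathcal{T}$ is convergent.
   Context: $\mathcal{M}$ is a geodesically complete connected Riemannian manifold with distance $d$. $M_t(p_0,p_1)$ is the geodesic average: the point at parameter $t$ on a fixed minimal geodesic $\gamma$ with $\gamma(0)=p_0,\gamma(1)=p_1$, extended beyond $[0,1]$ when needed (assumed defined for $t=-25/128$), with $d(p_0,M_t(p_0,p_1))=|t|d(p_0,p_1)$ and $d(M_t(p_0,p_1),p_1)=|1-t|d(p_0,p_1)$. Data $\mathbf{p}=(p_i)_{i\in\mathbb{Z}}$, $\delta(\mathbf{p})=\sup_id(p_i,p_{i+1})<\infty$. The scheme is the symmetric-geodesic-inductive-mean adaptation of the linear interpolatory 6-point scheme $f_{2i+1}\mapsto\frac1{256}(3f_{i-2}-25f_{i-1}+150f_i+150f_{i+1}-25f_{i+2}+3f_{i+3})$. Convergence: for every data $\mathbf{p}$ the curves $\mathrm{PG}_k(\mathcal{T}^k(\mathbf{p}))$ converge uniformly on $\mathbb{R}$, where $\mathrm{PG}_k(\mathbf{q})(t)=M_{2^kt-n}(q_n,q_{n+1})$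 for $t\in[2^{-k}n,2^{-k}(n+1))$. *)

theory Defs
  imports "HOL-Analysis.Analysis"
begin

text \<open>Abstract setting: the manifold is modelled by its Riemannian distance (a complete
metric space, by Hopf--Rinow) together with the geodesic average Mt p0 p1.\<close>

definition geodesic_average :: "(real \<Rightarrow> 'a::metric_space \<Rightarrow> 'a \<Rightarrow> 'a) \<Rightarrow> bool" where
  "geodesic_average Mav \<longleftrightarrow>
     (\<forall>t \<in> {0..1} \<union> {-25/128}. \<forall>x y.
        dist x (Mav t x y) = \<bar>t\<bar> * dist x y \<and>
        dist (Mav t x y) y = \<bar>1 - t\<bar> * dist x y)"

definition delta :: "(int \<Rightarrow> 'a::metric_space) \<Rightarrow> real" where
  "delta p = (SUP i. dist (p i) (p (i + 1)))"

definition scheme6 :: "(real \<Rightarrow> 'a \<Rightarrow> 'a \<Rightarrow> 'a) \<Rightarrow> (int \<Rightarrow> 'a) \<Rightarrow> (int \<Rightarrow> 'a)" where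
  "scheme6 Mav p = (\<lambda>j. if even j then p (j div 2)
     else (let i = j div 2;
               M1 = Mav (-25/128) (Mav (3/153) (p i) (p (i - 2))) (p (i - 1));
               M2 = Mav (-25/128) (Mav (3/153) (p (i + 1)) (p (i + 3))) (p (i + 2))
           in Mav (1/2) M1 M2))"

definition PG :: "(real \<Rightarrow> 'a \<Rightarrow> 'a \<Rightarrow> 'a) \<Rightarrow> nat \<Rightarrow> (int \<Rightarrow> 'a) \<Rightarrow> real \<Rightarrow> 'a" where
  "PG Mav k q t = (let n = \<lfloor>2 ^ k * t\<rfloor> in Mav (2 ^ k * t - of_int n) (q n) (q (n + 1)))"

end

theory Submission
  imports Defs
begin

lemma geoD:
  assumes "geodesic_average Mav" "t \<in> {0..1} \<union> {-25/128}"
  shows "dist x (Mav t x y) = \<bar>t\<bar> * dist x y" "dist (Mav t x y) y = \<bar>1 - t\<bar> * dist x y"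
  using assms unfolding geodesic_average_def by blast+

lemma M1bound:
  fixes x y z :: "'a::metric_space"
  assumes G: "geodesic_average Mav" and xy: "dist x y \<le> 2*D" and xz: "dist x z \<le> D"
  shows "dist x (Mav (-25/128) (Mav (3/153) x y) z) \<le> 4743/19584*D"
proof -
  define A where "A = Mav (3/153) x y"
  define M where "M = Mav (-25/128) A z"
  have h1: "dist x A = 3/153 * dist x y" unfolding A_def using geoD(1)[OF G, of "3/153"] by simp
  have h2: "dist A M = 25/128 * dist A z" unfolding M_def using geoD(1)[OF G, of "-25/128"] by simp
  have h3: "dist A z \<le> dist x A + dist x z" by (rule dist_triangle3)
  have h4: "dist x M \<le> dist x A + dist A M" by (rule dist_triangle)
  show ?thesis unfolding M_def[symmetric] A_def[symmetric] using h1 h2 h3 h4 xy xz by linarith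
qed

lemma combine:
  fixes a b M1 M2 :: "'a::metric_space"
  assumes G: "geodesic_average Mav" and "dist a M1 \<le> e1" "dist b M2 \<le> e2" "dist a b \<le> D"
  shows "dist a (Mav (1/2) M1 M2) \<le> 3/2*e1 + 1/2*D + 1/2*e2"
    "dist (Mav (1/2) M1 M2) b \<le> 1/2*e1 + 1/2*D + 3/2*e2"
proof -
  define T where "T = Mav (1/2) M1 M2"
  have h1: "dist M1 T = 1/2 * dist M1 M2" using geoD(1)[OF G, of "1/2"] unfolding T_def by simp
  have h2: "dist T M2 = 1/2 * dist M1 M2" using geoD(2)[OF G, of "1/2"] unfolding T_def by simp
  have h3a: "dist M1 M2 \<le> dist a M1 + dist a M2" by (rule dist_triangle3)
  have h3b: "dist a M2 \<le> dist a b + dist b M2" by (rule dist_triangle)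
  have h4: "dist a T \<le> dist a M1 + dist M1 T" by (rule dist_triangle)
  have h5: "dist T b \<le> dist T M2 + dist b M2" by (rule dist_triangle2)
  have "dist a T \<le> 3/2*e1 + 1/2*D + 1/2*e2" using h1 h3a h3b h4 assms(2-4) by linarith
  then show "dist a (Mav (1/2) M1 M2) \<le> 3/2*e1 + 1/2*D + 1/2*e2" unfolding T_def .
  have "dist T b \<le> 1/2*e1 + 1/2*D + 3/2*e2" using h2 h3a h3b h5 assms(2-4) by linarith
  then show "dist (Mav (1/2) M1 M2) b \<le> 1/2*e1 + 1/2*D + 3/2*e2" unfolding T_def .
qed

lemma delta_upper:
  assumes "bdd_above (range (\<lambda>i. dist (p i) (p (i + 1))))"
  shows "dist (p i) (p (i + 1)) \<le> delta p"
  unfolding delta_def by (rule cSUP_upper[OF _ assms]) simp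

lemma delta_nonneg:
  assumes "bdd_above (range (\<lambda>i. dist (p i) (p (i + 1))))"
  shows "0 \<le> delta p"
  using delta_upper[OF assms, of 0] zero_le_dist order_trans by blast

lemma step_bound:
  assumes G: "geodesic_average Mav"
    and B: "bdd_above (range (\<lambda>i. dist (p i) (p (i + 1))))"
  shows "dist (scheme6 Mav p j) (scheme6 Mav p (j + 1)) \<le> 9844/10000 * delta p"
proof -
  define D where "D = delta p"
  have st: "\<And>i. dist (p i) (p (i + 1)) \<le> D" unfolding D_def by (rule delta_upper[OF B])
  have D0: "0 \<le> D" unfolding D_def by (rule delta_nonneg[OF B])
  define i where "i = j div 2"
  define M1 where "M1 = Mav (-25/128) (Mav (3/153) (p i) (p (i - 2))) (p (i - 1))"
  define M2 where "M2 = Mav (-25/128) (Mav (3/153) (p (i + 1)) (p (i + 3))) (p (i + 2))"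
  have e1: "dist (p i) M1 \<le> 4743/19584*D" unfolding M1_def
  proof (rule M1bound[OF G])
    have "dist (p (i-2)) (p (i-2+1)) \<le> D" "dist (p (i-1)) (p (i-1+1)) \<le> D" using st by blast+
    hence a: "dist (p (i-2)) (p (i-1)) \<le> D" "dist (p (i-1)) (p i) \<le> D" by (simp_all add: algebra_simps)
    have "dist (p i) (p (i-2)) \<le> dist (p (i-2)) (p (i-1)) + dist (p (i-1)) (p i)"
      using dist_triangle[of "p (i-2)" "p i" "p (i-1)"] by (simp add: dist_commute)
    thus "dist (p i) (p (i - 2)) \<le> 2 * D" using a by linarith
    show "dist (p i) (p (i - 1)) \<le> D" using a by (simp add: dist_commute)
  qed
  have e2: "dist (p (i+1)) M2 \<le> 4743/19584*D" unfolding M2_def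
  proof (rule M1bound[OF G])
    have "dist (p (i+1)) (p (i+1+1)) \<le> D" "dist (p (i+2)) (p (i+2+1)) \<le> D" using st by blast+
    hence a: "dist (p (i+1)) (p (i+2)) \<le> D" "dist (p (i+2)) (p (i+3)) \<le> D" by (simp_all add: algebra_simps)
    have "dist (p (i+1)) (p (i+3)) \<le> dist (p (i+1)) (p (i+2)) + dist (p (i+2)) (p (i+3))"
      by (rule dist_triangle)
    thus "dist (p (i+1)) (p (i+3)) \<le> 2 * D" using a by linarith
    show "dist (p (i+1)) (p (i+2)) \<le> D" using a by simp
  qed
  have ab: "dist (p i) (p (i+1)) \<le> D" by (rule st)
  note c = combine[OF G e1 e2 ab]
  have num: "3/2*(4743/19584*D) + 1/2*D + 1/2*(4743/19584*D) \<le> 9844/10000 * D"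
    using D0 by simp
  show ?thesis
  proof (cases "even j")
    case True
    then obtain k where j: "j = 2*k" by blast
    have ik: "i = k" unfolding i_def j by simp
    have "(j + 1) div 2 = i" unfolding i_def j by simp
    hence "scheme6 Mav p (j+1) = Mav (1/2) M1 M2" using True
      unfolding scheme6_def M1_def M2_def by (simp add: Let_def)
    moreover have "scheme6 Mav p j = p i" using True unfolding scheme6_def i_def by simp
    ultimately show ?thesis using c(1) num D_def by simp
  next
    case False
    then obtain k where j: "j = 2*k+1" using oddE by blast
    have ik: "i = k" unfolding i_def j by simp
    have "scheme6 Mav p j = Mav (1/2) M1 M2" using False
      unfolding scheme6_def M1_def M2_def i_def by (simp add: Let_def)
    moreover have "scheme6 Mav p (j+1) = p (i+1)" unfolding scheme6_def j ik by (simp add: add.commute)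
    ultimately show ?thesis using c(2) num D_def by simp
  qed
qed


lemma scheme_bdd:
  assumes G: "geodesic_average Mav"
    and B: "bdd_above (range (\<lambda>i. dist (p i) (p (i + 1))))"
  shows "bdd_above (range (\<lambda>j. dist (scheme6 Mav p j) (scheme6 Mav p (j + 1))))"
  using step_bound[OF G B] by (intro bdd_aboveI2) 

lemma scheme_delta:
  assumes G: "geodesic_average Mav"
    and B: "bdd_above (range (\<lambda>i. dist (p i) (p (i + 1))))"
  shows "delta (scheme6 Mav p) \<le> 9844/10000 * delta p"
  unfolding delta_def[of "scheme6 Mav p"]
  by (rule cSUP_least) (use step_bound[OF G B] in auto)

lemma iter_props:
  assumes G: "geodesic_average Mav"
    and B: "bdd_above (range (\<lambda>i. dist (p i) (p (i + 1))))"
  shows "bdd_above (range (\<lambda>i. dist ((scheme6 Mav ^^ k) p i) ((scheme6 Mav ^^ k) p (i + 1))))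
     \<and> delta ((scheme6 Mav ^^ k) p) \<le> (9844/10000)^k * delta p"
proof (induction k)
  case 0
  then show ?case using B by simp
next
  case (Suc k)
  let ?q = "(scheme6 Mav ^^ k) p"
  have b: "bdd_above (range (\<lambda>i. dist (?q i) (?q (i + 1))))" by (rule conjunct1[OF Suc.IH])
  have "delta (scheme6 Mav ?q) \<le> 9844/10000 * delta ?q" by (rule scheme_delta[OF G b])
  also have "\<dots> \<le> 9844/10000 * ((9844/10000)^k * delta p)" using conjunct2[OF Suc.IH] by simp
  finally show ?case using scheme_bdd[OF G b] by simp
qed

lemma geo_le:
  assumes G: "geodesic_average Mav" and "0 \<le> s" "s \<le> 1"
  shows "dist x (Mav s x y) \<le> dist x y"
proof -
  have "dist x (Mav s x y) = \<bar>s\<bar> * dist x y" using geoD(1)[OF G] assms by simp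
  also have "\<dots> \<le> 1 * dist x y" using assms by (intro mult_right_mono) auto
  finally show ?thesis by simp
qed

lemma PG_near:
  assumes G: "geodesic_average Mav"
  shows "dist (q \<lfloor>2 ^ k * t\<rfloor>) (PG Mav k q t) \<le> dist (q \<lfloor>2 ^ k * t\<rfloor>) (q (\<lfloor>2 ^ k * t\<rfloor> + 1))"
proof -
  define x :: real where "x = 2 ^ k * t"
  have "of_int \<lfloor>x\<rfloor> \<le> x" by (rule of_int_floor_le)
  moreover have "x < of_int \<lfloor>x\<rfloor> + 1" by (rule real_of_int_floor_add_one_gt)
  ultimately have "0 \<le> x - of_int \<lfloor>x\<rfloor>" "x - of_int \<lfloor>x\<rfloor> \<le> 1" by linarith+
  then show ?thesis unfolding PG_def x_def[symmetric] Let_def by (rule geo_le[OF G])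
qed

lemma PG_step:
  assumes G: "geodesic_average Mav"
    and B: "bdd_above (range (\<lambda>i. dist (q i) (q (i + 1))))"
  shows "dist (PG Mav (Suc k) (scheme6 Mav q) t) (PG Mav k q t) \<le> 3 * delta q"
proof -
  define q' where "q' = scheme6 Mav q"
  have B': "bdd_above (range (\<lambda>i. dist (q' i) (q' (i + 1))))" unfolding q'_def by (rule scheme_bdd[OF G B])
  have dd: "delta q' \<le> delta q" unfolding q'_def using scheme_delta[OF G B] delta_nonneg[OF B] by linarith
  define x :: real where "x = 2 ^ k * t"
  define n where "n = \<lfloor>x\<rfloor>"
  define m where "m = \<lfloor>2 ^ Suc k * t\<rfloor>"
  have xm: "2 ^ Suc k * t = 2 * x" unfolding x_def by simp
  have f1: "of_int n \<le> x" unfolding n_def by (rule of_int_floor_le)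
  have f2: "x < of_int n + 1" unfolding n_def by (rule real_of_int_floor_add_one_gt)
  have "2 * n \<le> m" unfolding m_def xm using f1 by (simp add: le_floor_iff)
  moreover have "m < 2 * n + 2" unfolding m_def xm using f2 by (simp add: floor_less_iff)
  ultimately have mc: "m = 2*n \<or> m = 2*n + 1" by linarith
  have q2n: "q' (2*n) = q n" unfolding q'_def scheme6_def by simp
  have a1: "dist (q n) (q' m) \<le> delta q'"
    using mc
  proof
    assume "m = 2*n" then show ?thesis using q2n delta_nonneg[OF B'] by simp
  next
    assume "m = 2*n+1" then show ?thesis using q2n delta_upper[OF B', of "2*n"] by simp
  qed
  have a2: "dist (q' m) (PG Mav (Suc k) q' t) \<le> delta q'"
    using PG_near[OF G, of q' "Suc k" t] delta_upper[OF B', of m] unfolding m_def by linarith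
  have a3: "dist (q n) (PG Mav k q t) \<le> delta q"
    using PG_near[OF G, of q k t] delta_upper[OF B, of n] unfolding n_def x_def by linarith
  have "dist (PG Mav (Suc k) q' t) (PG Mav k q t) \<le> dist (q' m) (PG Mav (Suc k) q' t) + dist (q' m) (PG Mav k q t)"
    by (rule dist_triangle3)
  also have "dist (q' m) (PG Mav k q t) \<le> dist (q n) (q' m) + dist (q n) (PG Mav k q t)"
    by (rule dist_triangle3)
  finally show ?thesis using a1 a2 a3 dd unfolding q'_def by linarith
qed


lemma telescope:
  fixes F :: "nat \<Rightarrow> 'b \<Rightarrow> 'a::metric_space"
  assumes st: "\<And>k. dist (F (Suc k) t) (F k t) \<le> C * \<mu>^k" and mu: "0 \<le> \<mu>" "\<mu> < 1"
  shows "dist (F n t) (F (n + j) t) \<le> C / (1 - \<mu>) * (\<mu>^n - \<mu>^(n+j))"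
proof (induction j)
  case 0 then show ?case by simp
next
  case (Suc j)
  have "dist (F n t) (F (n + Suc j) t) \<le> dist (F n t) (F (n + j) t) + dist (F (Suc (n + j)) t) (F (n + j) t)"
    using dist_triangle2[of "F n t" "F (Suc (n+j)) t" "F (n + j) t"] by (simp add: dist_commute)
  also have "\<dots> \<le> C / (1 - \<mu>) * (\<mu>^n - \<mu>^(n+j)) + C * \<mu>^(n+j)" using Suc st[of "n+j"] by linarith
  also have "\<dots> = C / (1 - \<mu>) * (\<mu>^n - \<mu>^(n + Suc j))" using mu by (simp add: field_simps)
  finally show ?case .
qed

theorem mainTheorem8:
  fixes Mav :: "real \<Rightarrow> 'a::complete_space \<Rightarrow> 'a \<Rightarrow> 'a"
    and p :: "int \<Rightarrow> 'a"
  assumes "geodesic_average Mav"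
    and "bdd_above (range (\<lambda>i. dist (p i) (p (i + 1))))"
  shows "delta (scheme6 Mav p) \<le> 0.9844 * delta p
    \<and> (\<exists>f. uniform_limit UNIV (\<lambda>k. PG Mav k ((scheme6 Mav ^^ k) p)) f sequentially)"
proof
  note G = assms(1) and B = assms(2)
  show "delta (scheme6 Mav p) \<le> 0.9844 * delta p" using scheme_delta[OF G B] by simp
  define \<mu> :: real where "\<mu> = 9844/10000"
  define F where "F = (\<lambda>k. PG Mav k ((scheme6 Mav ^^ k) p))"
  define C where "C = 3 * delta p"
  have C0: "0 \<le> C" unfolding C_def using delta_nonneg[OF B] by simp
  have mu: "0 \<le> \<mu>" "\<mu> < 1" unfolding \<mu>_def by simp_all
  have st: "dist (F (Suc k) t) (F k t) \<le> C * \<mu>^k" for k t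
  proof -
    note ip = iter_props[OF G B, of k]
    have "dist (F (Suc k) t) (F k t) \<le> 3 * delta ((scheme6 Mav ^^ k) p)"
      unfolding F_def using PG_step[OF G conjunct1[OF ip], of k t] by simp
    also have "\<dots> \<le> 3 * ((9844/10000)^k * delta p)" using conjunct2[OF ip] by simp
    finally show ?thesis unfolding C_def \<mu>_def by (simp add: mult_ac)
  qed
  define K where "K = C / (1 - \<mu>)"
  have K0: "0 \<le> K" unfolding K_def using C0 mu by simp
  have bnd: "dist (F m x) (F n x) \<le> K * \<mu>^m" if "m \<le> n" for m n x
  proof -
    obtain j where n: "n = m + j" using \<open>m \<le> n\<close> le_Suc_ex by blast
    have "dist (F m x) (F n x) \<le> K * (\<mu>^m - \<mu>^(m+j))" unfolding n K_def by (rule telescope[OF st mu])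
    also have "\<dots> \<le> K * \<mu>^m" using K0 mu by (simp add: mult_left_mono)
    finally show ?thesis .
  qed
  have lim: "(\<lambda>n. K * \<mu>^n) \<longlonglongrightarrow> 0"
    using mu by (intro tendsto_mult_right_zero LIMSEQ_power_zero) simp
  have "uniformly_Cauchy_on UNIV F"
  proof (rule uniformly_Cauchy_onI')
    fix e :: real assume e: "e > 0"
    have "eventually (\<lambda>n. K * \<mu>^n < e) sequentially" using order_tendstoD(2)[OF lim e] .
    then obtain N where N: "\<And>n. n \<ge> N \<Longrightarrow> K * \<mu>^n < e" unfolding eventually_sequentially by blast
    show "\<exists>M. \<forall>x\<in>UNIV. \<forall>m\<ge>M. \<forall>n>m. dist (F m x) (F n x) < e"
    proof (intro exI ballI allI impI)
      fix x m n assume "N \<le> m" "m < n"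
      then show "dist (F m x) (F n x) < e" using bnd[of m n x] N[of m] by simp
    qed
  qed
  then have "uniformly_convergent_on UNIV F" by (rule Cauchy_uniformly_convergent)
  then show "\<exists>f. uniform_limit UNIV (\<lambda>k. PG Mav k ((scheme6 Mav ^^ k) p)) f sequentially"
    unfolding uniformly_convergent_on_def F_def .
qed

end
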